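(* Let $\alpha\in(0,1)$ and let $\bm A,\bm B\in\mathbb{C}^{N\times N}$ be orthogonal projection matrices. Define $\widetilde\Delta_0=\operatorname{Tr}(\bm A)-\alpha N$ and, for $k\ge1$, $$\widetilde\Delta_k=-\sum_{a=0}^{k-1}\widetilde\Delta_a\sum_{j=1}^{k-1}(-\alpha)^{k-j}q_{k,j,a}(1)+\mathbf 1\{k\text{ odd}\}\,2\alpha^k\big(\operatorname{Tr}(\bm B)-\tfrac12N\big)+\operatorname{Tr}\Big(\big((\bm A-\alpha\bm I_N)(2\bm B-\bm I_N)\big)^k\Big).$$ Also define $\widetilde\delta_0=\operatorname{Tr}(\bm A)-\alpha N$ and, for $k\ge1$, $$\widetilde\delta_k=\operatorname{Tr}\Big(\big((\bm A-\alpha\bm I_N)(2\bm B-\bm I_N)\big)^k\Big)+\mathbf 1\{k\text{ even}\}\,2\alpha^k\big(\operatorname{Tr}(\bm A)-\alpha N\big)+\mathbf 1\{k\text{ odd}\}\,2\alpha^k\big(\operatorname{Tr}(\bm B)-\tfrac12N\big).$$ Then for all $k\ge1$, $$\widetilde\Delta_k=\sum_{\substack{0\le a\le k\\ a\equiv k\ (\mathrm{mod}\ 2)}}\binom{k}{\frac{k+a}2}(\alpha(1-\alpha))^{\frac{k-a}2}\,\widetilde\delta_a.$$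
   Context: For $k\ge1$ and a nonempty $S=\{s_1<\dots<s_j\}\subseteq[k]$, define $p_1(S)=s_2-s_1,\dots,p_{j-1}(S)=s_j-s_{j-1}$, $p_j(S)=k+s_1-s_j$. For $1\le j\le k$ and $0\le a\le j$ define $$q_{k,j,a}(x)=\sum_{S\subseteq[k],\,|S|=j}\ \sum_{A\subseteq[j],\,|A|=a}\ \prod_{i=1}^j\Big(\sum_{b=0}^{p_i(S)-1}(-1)^{p_i(S)-1-b}x^b+(-1)^{p_i(S)}\mathbf 1\{i\notin A\}\Big),$$ and set $q_{k,0,0}=0$ and $q_{k,j,a}=0$ when $a>j$. *)

theory Defs
  imports "Jordan_Normal_Form.Matrix"
begin

definition tr :: "'a::comm_monoid_add mat \<Rightarrow> 'a" where
  "tr M = (\<Sum>i<dim_row M. M $$ (i,i))"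

definition orth_proj :: "nat \<Rightarrow> complex mat \<Rightarrow> bool" where
  "orth_proj N M \<longleftrightarrow> M \<in> carrier_mat N N \<and>
     (\<forall>i<N. \<forall>j<N. M $$ (i,j) = cnj (M $$ (j,i))) \<and> M * M = M"

(* p_i(S) for 1 <= i <= j = |S|, S = {s_1 < ... < s_j} \<subseteq> [k] *)
definition gap :: "nat \<Rightarrow> nat set \<Rightarrow> nat \<Rightarrow> nat" where
  "gap k S i = (let s = sorted_list_of_set S; j = card S in
     if i < j then s ! i - s ! (i - 1) else k + s ! 0 - s ! (j - 1))"

definition qpoly :: "nat \<Rightarrow> nat \<Rightarrow> nat \<Rightarrow> 'a::comm_ring_1 \<Rightarrow> 'a" where
  "qpoly k j a x = (if j = 0 \<or> a > j then 0 else
     (\<Sum>S\<in>{S. S \<subseteq> {1..k} \<and> card S = j}.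
       \<Sum>A\<in>{A. A \<subseteq> {1..j} \<and> card A = a}.
         \<Prod>i\<in>{1..j}. ((\<Sum>b=0..<gap k S i. (-1) ^ (gap k S i - 1 - b) * x ^ b)
            + (-1) ^ gap k S i * (if i \<notin> A then 1 else 0))))"

end

theory Submission
  imports Defs "HOL-Computational_Algebra.Polynomial"
begin

definition io :: "nat set \<Rightarrow> nat" where
  "io S = card {i\<in>{1..<card S}. odd (sorted_list_of_set S ! i - sorted_list_of_set S ! (i-1))}"

definition oc :: "nat \<Rightarrow> nat set \<Rightarrow> nat" where
  "oc k S = card {i\<in>{1..card S}. odd (gap k S i)}"

lemma sl_insert_max:
  assumes "finite S" "\<forall>y\<in>S. y < m"
  shows "sorted_list_of_set (insert m S) = sorted_list_of_set S @ [m]"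
proof -
  have "m \<notin> S" using assms by auto
  have "sorted_wrt (<) (sorted_list_of_set S @ [m]) \<and> set (sorted_list_of_set S @ [m]) = insert m S
     \<and> length (sorted_list_of_set S @ [m]) = card (insert m S)"
    using assms \<open>m \<notin> S\<close> by (auto simp: sorted_wrt_append)
  then show ?thesis using assms by (subst sorted_list_of_set_unique[symmetric]) auto
qed

lemma sl_first:
  assumes "finite S" "S \<noteq> {}"
  shows "sorted_list_of_set S ! 0 = Min S"
  using sorted_list_of_set_nonempty[OF assms] by simp

lemma sl_last:
  assumes "finite S" "S \<noteq> {}"
  shows "sorted_list_of_set S ! (card S - 1) = Max S"
proof -
  let ?s = "sorted_list_of_set S"
  have len: "length ?s = card S" by simp
  have cpos: "card S > 0" using assms by auto
  have in1: "?s ! (card S - 1) \<in> S"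
    using assms len cpos by (metis diff_less less_one nth_mem set_sorted_list_of_set)
  have "\<forall>y\<in>S. y \<le> ?s ! (card S - 1)"
  proof
    fix y assume "y \<in> S"
    then have "y \<in> set ?s" using assms by simp
    then obtain i where i: "i < length ?s" "?s ! i = y" by (meson in_set_conv_nth)
    have "sorted ?s" by simp
    moreover have "i \<le> card S - 1" using i len by linarith
    moreover have "card S - 1 < length ?s" using len cpos by linarith
    ultimately show "y \<le> ?s ! (card S - 1)" using i(2) sorted_nth_mono by blast
  qed
  then show ?thesis using in1 assms by (intro Max_eqI[symmetric]) auto
qed

lemma io_single: "io {m} = 0"
  by (simp add: io_def)

lemma card_filter_insert_top:
  "card {i\<in>{1..<Suc j}. P i} = card {i\<in>{1..<j}. P i} + (if P j \<and> j \<ge> 1 then 1 else 0)"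
proof (cases "P j \<and> j \<ge> 1")
  case True
  then have "{i\<in>{1..<Suc j}. P i} = insert j {i\<in>{1..<j}. P i}" by (auto simp: less_Suc_eq)
  then show ?thesis using True by simp
next
  case False
  then have "{i\<in>{1..<Suc j}. P i} = {i\<in>{1..<j}. P i}" by (auto simp: less_Suc_eq)
  then show ?thesis using False by simp
qed

lemma io_insert:
  assumes "finite S" "S \<noteq> {}" "\<forall>y\<in>S. y < m"
  shows "io (insert m S) = io S + (if odd (m - Max S) then 1 else 0)"
proof -
  let ?s = "sorted_list_of_set S"
  have sl: "sorted_list_of_set (insert m S) = ?s @ [m]" by (rule sl_insert_max[OF assms(1,3)])
  have mS: "m \<notin> S" using assms by auto
  have cI: "card (insert m S) = Suc (card S)" using assms mS by simp
  have cpos: "card S \<ge> 1" using assms by (simp add: Suc_leI card_gt_0_iff)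
  have len: "length ?s = card S" by simp
  have eq: "{i\<in>{1..<card S}. odd ((?s @ [m]) ! i - (?s @ [m]) ! (i-1))}
        = {i\<in>{1..<card S}. odd (?s ! i - ?s ! (i-1))}"
    using len by (auto simp: nth_append)
  have last: "(?s @ [m]) ! card S - (?s @ [m]) ! (card S - 1) = m - Max S"
    using len cpos sl_last[OF assms(1,2)] by (simp add: nth_append)
  have "io (insert m S) = card {i\<in>{1..<Suc (card S)}. odd ((?s @ [m]) ! i - (?s @ [m]) ! (i-1))}"
    unfolding io_def sl cI ..
  also have "\<dots> = card {i\<in>{1..<card S}. odd ((?s @ [m]) ! i - (?s @ [m]) ! (i-1))}
      + (if odd ((?s @ [m]) ! card S - (?s @ [m]) ! (card S - 1)) \<and> card S \<ge> 1 then 1 else 0)"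
    by (rule card_filter_insert_top)
  also have "\<dots> = io S + (if odd (m - Max S) then 1 else 0)"
    unfolding eq last io_def using cpos by presburger
  finally show ?thesis .
qed

lemma oc_eq:
  assumes "finite S" "S \<noteq> {}"
  shows "oc k S = io S + (if odd (k + Min S - Max S) then 1 else 0)"
proof -
  let ?s = "sorted_list_of_set S"
  have cpos: "card S \<ge> 1" using assms by (simp add: Suc_leI card_gt_0_iff)
  have e1: "{1..card S} = {1..<Suc (card S)}" by auto
  have e3: "{i\<in>{1..<card S}. odd (gap k S i)} = {i\<in>{1..<card S}. odd (?s ! i - ?s ! (i-1))}"
    by (auto simp: gap_def Let_def)
  have g: "gap k S (card S) = k + Min S - Max S"
    using sl_first[OF assms] sl_last[OF assms] by (simp add: gap_def Let_def)
  have "oc k S = card {i\<in>{1..<Suc (card S)}. odd (gap k S i)}"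
    unfolding oc_def e1 ..
  also have "\<dots> = card {i\<in>{1..<card S}. odd (gap k S i)} + (if odd (gap k S (card S)) \<and> card S \<ge> 1 then 1 else 0)"
    by (rule card_filter_insert_top)
  finally show ?thesis unfolding e3 g io_def using cpos by simp
qed

definition MS :: "bool \<Rightarrow> bool \<Rightarrow> complex poly" where
  "MS l e = (if e then 0 else if l then 1 else [:0,1:])"
definition MN :: "complex \<Rightarrow> bool \<Rightarrow> bool \<Rightarrow> complex poly" where
  "MN c l e = (if e = (\<not> l) then [:-c:] else 0)"

fun Pr :: "complex \<Rightarrow> nat set \<Rightarrow> nat \<Rightarrow> bool \<Rightarrow> bool \<Rightarrow> complex poly" where
  "Pr c S 0 e e' = (if e = e' then 1 else 0)"
| "Pr c S (Suc n) e e' =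
     Pr c S n e False * (if Suc n \<in> S then MS False e' else MN c False e')
   + Pr c S n e True * (if Suc n \<in> S then MS True e' else MN c True e')"

fun Tp :: "complex \<Rightarrow> nat \<Rightarrow> bool \<Rightarrow> bool \<Rightarrow> complex poly" where
  "Tp c 0 e e' = (if e = e' then 1 else 0)"
| "Tp c (Suc n) e e' =
     Tp c n e False * (MS False e' + MN c False e') + Tp c n e True * (MS True e' + MN c True e')"

lemma Pr_cong: "(\<And>i. 1 \<le> i \<Longrightarrow> i \<le> n \<Longrightarrow> (i \<in> S \<longleftrightarrow> i \<in> S')) \<Longrightarrow> Pr c S n e e' = Pr c S' n e e'"
proof (induction n arbitrary: e')
  case 0 then show ?case by simp
next
  case (Suc n)
  have IH: "\<And>e'. Pr c S n e e' = Pr c S' n e e'" using Suc by simp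
  have "Suc n \<in> S \<longleftrightarrow> Suc n \<in> S'" using Suc.prems by simp
  then show ?case by (simp only: Pr.simps IH)
qed

lemma Pr_sum: "(\<Sum>S\<in>Pow {1..n}. Pr c S n e e') = Tp c n e e'"
proof (induction n arbitrary: e')
  case 0 then show ?case by simp
next
  case (Suc n)
  have P: "Pow {1..Suc n} = Pow {1..n} \<union> insert (Suc n) ` Pow {1..n}"
    by (simp add: atLeastAtMostSuc_conv Pow_insert)
  have nin: "\<And>A. A \<in> Pow {1..n} \<Longrightarrow> Suc n \<notin> A" by auto
  have D: "Pow {1..n} \<inter> insert (Suc n) ` Pow {1..n} = {}" using nin by blast
  have I: "inj_on (insert (Suc n)) (Pow {1..n})"
  proof (rule inj_onI)
    fix A B assume a: "A \<in> Pow {1..n}" "B \<in> Pow {1..n}" "insert (Suc n) A = insert (Suc n) B"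
    have "A = insert (Suc n) A - {Suc n}" using nin[OF a(1)] by simp
    also have "\<dots> = B" using nin[OF a(2)] a(3) by simp
    finally show "A = B" .
  qed
  have A: "\<And>S l. S \<in> Pow {1..n} \<Longrightarrow> Pr c S (Suc n) e l = Pr c S n e False * MN c False l + Pr c S n e True * MN c True l"
    by auto
  have B: "\<And>S l. S \<in> Pow {1..n} \<Longrightarrow> Pr c (insert (Suc n) S) (Suc n) e l = Pr c S n e False * MS False l + Pr c S n e True * MS True l"
  proof -
    fix S l assume "S \<in> Pow {1..n}"
    have "\<And>b. Pr c (insert (Suc n) S) n e b = Pr c S n e b" by (rule Pr_cong) auto
    then show "Pr c (insert (Suc n) S) (Suc n) e l = Pr c S n e False * MS False l + Pr c S n e True * MS True l"
      by simp
  qed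
  have "(\<Sum>S\<in>Pow {1..Suc n}. Pr c S (Suc n) e e') =
     (\<Sum>S\<in>Pow {1..n}. Pr c S (Suc n) e e') + (\<Sum>S\<in>Pow {1..n}. Pr c (insert (Suc n) S) (Suc n) e e')"
  proof -
    have "(\<Sum>S\<in>Pow {1..Suc n}. Pr c S (Suc n) e e') = (\<Sum>S\<in>Pow {1..n}. Pr c S (Suc n) e e')
       + (\<Sum>S\<in>insert (Suc n) ` Pow {1..n}. Pr c S (Suc n) e e')"
      unfolding P using D by (intro sum.union_disjoint) auto
    also have "(\<Sum>S\<in>insert (Suc n) ` Pow {1..n}. Pr c S (Suc n) e e') = (\<Sum>S\<in>Pow {1..n}. Pr c (insert (Suc n) S) (Suc n) e e')"
      by (simp only: sum.reindex[OF I] o_def)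
    finally show ?thesis .
  qed
  also have "\<dots> = (\<Sum>S\<in>Pow {1..n}. Pr c S n e False * MN c False e' + Pr c S n e True * MN c True e')
      + (\<Sum>S\<in>Pow {1..n}. Pr c S n e False * MS False e' + Pr c S n e True * MS True e')"
    by (rule arg_cong2[where f="(+)"]; rule sum.cong; simp only: A B)
  also have "\<dots> = Tp c n e False * MN c False e' + Tp c n e True * MN c True e'
      + (Tp c n e False * MS False e' + Tp c n e True * MS True e')"
    by (simp only: sum.distrib sum_distrib_right[symmetric] Suc.IH)
  also have "\<dots> = Tp c (Suc n) e e'" by (simp add: algebra_simps)
  finally show ?case .
qed

lemma Pr_empty: "Pr c {} n e e' = (if e' = (if odd n then \<not> e else e) then [:(-c)^n:] else 0)"
  by (induction n arbitrary: e') (auto simp: MN_def)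

lemma monom_mult_const: "monom (a::complex) m * [:b:] = monom (a*b) m"
  by (simp add: smult_monom mult.commute)

lemma monom_X: "monom (a::complex) m * [:0,1:] = monom a (Suc m)"
  by (simp add: monom_Suc mult.commute)

lemma aux1: "(if (\<not> e') = odd (d::nat) then monom ((-c)^m) x else 0) * [:-c:]
   = (if e' = odd (Suc d) then monom ((-c)^(Suc m)) x else 0)"
  by (cases e') (auto simp: monom_mult_const mult.commute smult_monom)

lemma Pr_nonempty:
  assumes "S \<subseteq> {1..n}" "S \<noteq> {}"
  shows "Pr c S n e e' = (if e' = odd (n - Max S) then
     monom ((-c)^(n - card S)) (io S + (if e = odd (Min S - 1) then 1 else 0)) else 0)"
  using assms
proof (induction n arbitrary: S e')
  case 0 then show ?case by auto
next
  case (Suc n)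
  have fin: "finite S" using Suc.prems finite_subset by blast
  show ?case
  proof (cases "Suc n \<in> S")
    case False
    then have sub: "S \<subseteq> {1..n}" using Suc.prems by (auto simp: le_Suc_eq)
    have mx: "Max S \<le> n" using sub Suc.prems fin by auto
    have cd: "card S \<le> n" using card_mono[OF _ sub] by simp
    have st: "Pr c S (Suc n) e e' = Pr c S n e (\<not> e') * [:-c:]"
      using False by (cases e') (auto simp: MN_def)
    have e1: "Suc n - Max S = Suc (n - Max S)" using mx by simp
    have e2: "Suc n - card S = Suc (n - card S)" using cd by simp
    show ?thesis unfolding st Suc.IH[OF sub Suc.prems(2)] e1 e2 aux1 ..
  next
    case True
    define S' where "S' = S - {Suc n}"
    have sub: "S' \<subseteq> {1..n}" using Suc.prems by (auto simp: S'_def le_Suc_eq)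
    have SS: "S = insert (Suc n) S'" using True by (auto simp: S'_def)
    have cong: "\<And>b. Pr c S n e b = Pr c S' n e b" by (rule Pr_cong) (auto simp: S'_def)
    have PS: "Pr c S (Suc n) e e' = (if e' then 0 else Pr c S' n e False * [:0,1:] + Pr c S' n e True)"
      using True by (simp add: cong MS_def)
    show ?thesis
    proof (cases "S' = {}")
      case True
      then have S1: "S = {Suc n}" using SS by simp
      show ?thesis unfolding PS True Pr_empty unfolding S1
        by (cases e; cases "odd n") (auto simp: io_single monom_Suc monom_0)
    next
      case False
      have fin': "finite S'" using sub finite_subset by blast
      have mx: "Max S' \<le> n" using sub False fin' by auto
      have cd: "card S' \<le> n" using card_mono[OF _ sub] by simp
      have lt: "\<forall>y\<in>S'. y < Suc n" using sub by auto
      have ioS: "io S = io S' + (if odd (Suc n - Max S') then 1 else 0)"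
        unfolding SS by (rule io_insert[OF fin' False lt])
      have MxS: "Max S = Suc n"
      proof -
        have "Max S = max (Suc n) (Max S')" unfolding SS by (rule Max_insert[OF fin' False])
        also have "\<dots> = Suc n" using mx by (simp add: max_def)
        finally show ?thesis .
      qed
      have mn: "Min S' \<le> n" using Min_in[OF fin' False] sub by auto
      have MnS: "Min S = Min S'"
      proof -
        have "Min S = min (Suc n) (Min S')" unfolding SS by (rule Min_insert[OF fin' False])
        also have "\<dots> = Min S'" using mn by (simp add: min_def)
        finally show ?thesis .
      qed
      have nS: "Suc n \<notin> S'" using lt by blast
      have cS: "card S = Suc (card S')" unfolding SS using fin' nS by simp
      have e1: "Suc n - Max S' = Suc (n - Max S')" using mx by simp
      show ?thesis unfolding PS Suc.IH[OF sub False] ioS MxS MnS cS e1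
        by (auto simp: monom_X monom_Suc)
    qed
  qed
qed

fun Pp :: "complex \<Rightarrow> nat \<Rightarrow> complex poly" where
  "Pp c 0 = [:2:]"
| "Pp c (Suc 0) = [:0,1:]"
| "Pp c (Suc (Suc n)) = [:0,1:] * Pp c (Suc n) - [:c*(1-c):] * Pp c n"

lemma Tp_rec: "Tp c (Suc (Suc n)) e e' = [:0,1:] * Tp c (Suc n) e e' - [:c*(1-c):] * Tp c n e e'"
proof (induction n arbitrary: e')
  case 0
  show ?case by (cases e; cases e') (simp_all add: MS_def MN_def algebra_simps)
next
  case (Suc n)
  have "Tp c (Suc (Suc (Suc n))) e e' = Tp c (Suc (Suc n)) e False * (MS False e' + MN c False e')
     + Tp c (Suc (Suc n)) e True * (MS True e' + MN c True e')" by (simp only: Tp.simps)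
  also have "\<dots> = [:0,1:] * (Tp c (Suc n) e False * (MS False e' + MN c False e')
     + Tp c (Suc n) e True * (MS True e' + MN c True e')) - [:c*(1-c):] * (Tp c n e False * (MS False e' + MN c False e')
     + Tp c n e True * (MS True e' + MN c True e'))"
    unfolding Suc.IH by (simp only: algebra_simps)
  also have "\<dots> = [:0,1:] * Tp c (Suc (Suc n)) e e' - [:c*(1-c):] * Tp c (Suc n) e e'"
    by (simp only: Tp.simps)
  finally show ?case .
qed

lemma coeff_const: "coeff [:x:] a = (if a = 0 then x else 0)"
  by (cases a) auto

lemma tr_Tp: "Tp c n False False + Tp c n True True = Pp c n"
proof (induction c n rule: Pp.induct)
  case (1 c) then show ?case by (simp add: numeral_poly)
next
  case (2 c) then show ?case by (simp add: MS_def MN_def)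
next
  case (3 c n)
  show ?case by (simp only: Tp_rec Pp.simps flip: "3.IH") (simp only: algebra_simps)
qed

lemma tr_empty: "Pr c {} k False False + Pr c {} k True True = (if even k then [:2 * c^k:] else 0)"
  by (auto simp: Pr_empty)

lemma tr_nonempty:
  assumes "S \<subseteq> {1..k}" "S \<noteq> {}"
  shows "Pr c S k False False + Pr c S k True True = monom ((-c)^(k - card S)) (oc k S)"
proof -
  have fin: "finite S" using assms finite_subset by blast
  have mx: "Max S \<le> k" using assms fin by auto
  have mn: "Min S \<ge> 1" using assms fin Min_in by fastforce
  have mnx: "Min S \<le> Max S" using Min_le[OF fin Max_in[OF fin assms(2)]] .
  have par: "(odd (k - Max S) = odd (Min S - 1)) = odd (k + Min S - Max S)"
  proof -
    obtain a where a: "k = Max S + a" using mx le_Suc_ex by blast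
    obtain b where b: "Min S = Suc b" using mn by (metis Suc_pred' not_one_le_zero neq0_conv)
    show ?thesis using a b mnx by simp
  qed
  show ?thesis unfolding Pr_nonempty[OF assms] oc_eq[OF fin assms(2)]
    using par by (cases "odd (k - Max S)") auto
qed

lemma sum_tr: "(\<Sum>S\<in>Pow {1..k}. Pr c S k False False + Pr c S k True True) = Pp c k"
  by (simp only: sum.distrib Pr_sum tr_Tp)

lemma oc_full: "k \<ge> 1 \<Longrightarrow> oc k {1..k} = k"
proof -
  assume k: "k \<ge> 1"
  have fin: "finite {1..k}" and ne: "{1..k} \<noteq> {}" using k by auto
  have sl: "sorted_list_of_set {1..k} = [1..<Suc k]"
    using sorted_list_of_set_range[of 1 "Suc k"] by (simp add: atLeastLessThanSuc_atLeastAtMost)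
  have "{i\<in>{1..<card {1..k}}. odd (sorted_list_of_set {1..k} ! i - sorted_list_of_set {1..k} ! (i-1))} = {1..<k}"
    unfolding sl by (auto simp del: upt_Suc)
  then have "io {1..k} = k - 1" unfolding io_def by simp
  moreover have "Min {1..k} = 1" using k by (intro Min_eqI) auto
  moreover have "Max {1..k} = k" using k by (intro Max_eqI) auto
  ultimately show ?thesis unfolding oc_eq[OF fin ne] using k by simp
qed

lemma oc_le: "oc k S \<le> card S"
proof -
  have "oc k S \<le> card {1..card S}" unfolding oc_def by (rule card_mono) auto
  then show ?thesis by simp
qed

lemma coeff_count:
  assumes k: "k \<ge> 1" and a: "a < k"
  shows "(\<Sum>j=1..k-1. (-c)^(k-j) * of_nat (card {S. S\<subseteq>{1..k} \<and> card S = j \<and> oc k S = a}))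
     = coeff (Pp c k) a - (if a = 0 \<and> even k then 2*c^k else 0)"
proof -
  let ?t = "\<lambda>S. Pr c S k False False + Pr c S k True True"
  let ?P = "Pow {1..k} - {{}}"
  have "coeff (Pp c k) a = (\<Sum>S\<in>Pow {1..k}. coeff (?t S) a)"
    unfolding sum_tr[symmetric] coeff_sum ..
  also have "\<dots> = coeff (?t {}) a + (\<Sum>S\<in>?P. coeff (?t S) a)"
    by (rule sum.remove) auto
  also have "coeff (?t {}) a = (if a = 0 \<and> even k then 2*c^k else 0)"
    unfolding tr_empty by (auto simp: coeff_const)
  also have "(\<Sum>S\<in>?P. coeff (?t S) a) = (\<Sum>S\<in>?P. if oc k S = a then (-c)^(k - card S) else 0)"
    by (rule sum.cong) (auto simp: tr_nonempty)
  also have "\<dots> = (\<Sum>j\<in>{1..k}. \<Sum>S\<in>{S. S \<in> ?P \<and> card S = j}. if oc k S = a then (-c)^(k - card S) else 0)"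
  proof (rule sum.group[symmetric])
    show "finite ?P" by simp
    show "finite {1..k}" by simp
    show "card ` ?P \<subseteq> {1..k}"
    proof
      fix y assume "y \<in> card ` ?P"
      then obtain S where S: "S \<in> ?P" "y = card S" by blast
      then have "card S \<le> card {1..k}" by (intro card_mono) auto
      moreover have "card S \<ge> 1" using S by (auto simp: Suc_le_eq card_gt_0_iff intro: finite_subset)
      ultimately show "y \<in> {1..k}" using S by simp
    qed
  qed
  also have "\<dots> = (\<Sum>j\<in>{1..k}. (-c)^(k-j) * of_nat (card {S. S\<subseteq>{1..k} \<and> card S = j \<and> oc k S = a}))"
  proof (rule sum.cong[OF refl])
    fix j assume j: "j \<in> {1..k}"
    have "(\<Sum>S\<in>{S. S \<in> ?P \<and> card S = j}. if oc k S = a then (-c)^(k - card S) else 0)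
        = (\<Sum>S\<in>{S. S \<in> ?P \<and> card S = j}. if oc k S = a then (-c)^(k - j) else 0)"
      by (rule sum.cong) auto
    also have "\<dots> = (\<Sum>S\<in>{S\<in>{S. S \<in> ?P \<and> card S = j}. oc k S = a}. (-c)^(k - j))"
      by (rule sum.inter_filter[symmetric]) simp
    also have "{S\<in>{S. S \<in> ?P \<and> card S = j}. oc k S = a} = {S. S\<subseteq>{1..k} \<and> card S = j \<and> oc k S = a}"
      using j by auto
    finally show "(\<Sum>S\<in>{S. S \<in> ?P \<and> card S = j}. if oc k S = a then (-c)^(k - card S) else 0)
       = (-c)^(k-j) * of_nat (card {S. S\<subseteq>{1..k} \<and> card S = j \<and> oc k S = a})"
      by (simp add: mult.commute)
  qed
  also have "\<dots> = (\<Sum>j\<in>{1..k-1}. (-c)^(k-j) * of_nat (card {S. S\<subseteq>{1..k} \<and> card S = j \<and> oc k S = a}))"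
  proof -
    have e: "{1..k} = insert k {1..k-1}" using k by auto
    have "{S. S\<subseteq>{1..k} \<and> card S = k \<and> oc k S = a} = {}"
    proof (rule ccontr)
      assume "\<not> ?thesis"
      then obtain S where S: "S\<subseteq>{1..k}" "card S = k" "oc k S = a" by auto
      then have "S = {1..k}" by (intro card_subset_eq) auto
      then show False using S oc_full[OF k] a by simp
    qed
    then show ?thesis unfolding e by (subst sum.insert) auto
  qed
  finally show ?thesis by simp
qed

lemma inner_alt: "(\<Sum>b=0..<p. (-1::'a::comm_ring_1)^(p-1-b) * 1^b) = (if odd p then 1 else 0)"
proof (induction p)
  case 0 then show ?case by simp
next
  case (Suc p)
  have "(\<Sum>b=0..<Suc p. (-1::'a)^(Suc p-1-b) * 1^b) = (\<Sum>b=0..<p. (-1::'a)^(Suc p-1-b)) + 1"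
    by simp
  also have "(\<Sum>b=0..<p. (-1::'a)^(Suc p-1-b)) = - (\<Sum>b=0..<p. (-1::'a)^(p-1-b))"
  proof -
    have "(\<Sum>b=0..<p. (-1::'a)^(Suc p-1-b)) = (\<Sum>b=0..<p. - ((-1::'a)^(p-1-b)))"
    proof (rule sum.cong[OF refl])
      fix b assume "b \<in> {0..<p}"
      then have "Suc p - 1 - b = Suc (p - 1 - b)" by auto
      then show "(-1::'a)^(Suc p-1-b) = - ((-1::'a)^(p-1-b))" by simp
    qed
    then show ?thesis by (simp add: sum_negf)
  qed
  finally show ?case using Suc by simp
qed

lemma prod_indicator: "finite I \<Longrightarrow> (\<Prod>i\<in>I. if P i then (1::'a::comm_ring_1) else 0) = (if \<forall>i\<in>I. P i then 1 else 0)"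
  by (induction I rule: finite_induct) auto

lemma qpoly_1:
  assumes j: "j \<ge> 1"
  shows "qpoly k j a (1::'a::comm_ring_1) = of_nat (card {S. S\<subseteq>{1..k} \<and> card S = j \<and> oc k S = a})"
proof (cases "a > j")
  case True
  have E: "{S. S\<subseteq>{1..k} \<and> card S = j \<and> oc k S = a} = {}" proof -
    { fix S assume "oc k S = a" "card S = j"
      then have False using oc_le[of k S] True by simp }
    then show ?thesis by blast
  qed
  show ?thesis unfolding qpoly_def E using True by simp
next
  case False
  have inner: "(\<Sum>A\<in>{A. A \<subseteq> {1..j} \<and> card A = a}.
         \<Prod>i\<in>{1..j}. ((\<Sum>b=0..<gap k S i. (-1) ^ (gap k S i - 1 - b) * (1::'a) ^ b)
            + (-1) ^ gap k S i * (if i \<notin> A then 1 else 0)))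
       = (if oc k S = a then 1 else 0)" if S: "card S = j" for S
  proof -
    let ?O = "{i\<in>{1..j}. odd (gap k S i)}"
    have "(\<Sum>A\<in>{A. A \<subseteq> {1..j} \<and> card A = a}.
         \<Prod>i\<in>{1..j}. ((\<Sum>b=0..<gap k S i. (-1) ^ (gap k S i - 1 - b) * (1::'a) ^ b)
            + (-1) ^ gap k S i * (if i \<notin> A then 1 else 0)))
       = (\<Sum>A\<in>{A. A \<subseteq> {1..j} \<and> card A = a}. if A = ?O then 1 else 0)"
    proof (rule sum.cong[OF refl])
      fix A assume A: "A \<in> {A. A \<subseteq> {1..j} \<and> card A = a}"
      have "(\<Prod>i\<in>{1..j}. ((\<Sum>b=0..<gap k S i. (-1) ^ (gap k S i - 1 - b) * (1::'a) ^ b)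
            + (-1) ^ gap k S i * (if i \<notin> A then 1 else 0)))
          = (\<Prod>i\<in>{1..j}. if (i \<in> A) = odd (gap k S i) then 1 else 0)"
        by (rule prod.cong[OF refl], unfold inner_alt, auto)
      also have "\<dots> = (if A = ?O then 1 else 0)"
        unfolding prod_indicator[OF finite_atLeastAtMost] using A by auto
      finally show "(\<Prod>i\<in>{1..j}. ((\<Sum>b=0..<gap k S i. (-1) ^ (gap k S i - 1 - b) * (1::'a) ^ b)
            + (-1) ^ gap k S i * (if i \<notin> A then 1 else 0))) = (if A = ?O then 1 else 0)" .
    qed
    also have "\<dots> = (if ?O \<in> {A. A \<subseteq> {1..j} \<and> card A = a} then 1 else 0)"
      by (subst sum.delta) auto
    also have "\<dots> = (if oc k S = a then 1 else 0)"
      unfolding oc_def S by auto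
    finally show ?thesis .
  qed
  have "qpoly k j a (1::'a) = (\<Sum>S\<in>{S. S \<subseteq> {1..k} \<and> card S = j}. if oc k S = a then 1 else 0)"
  proof -
    have c: "\<not> (j = 0 \<or> a > j)" using False j by simp
    show ?thesis unfolding qpoly_def if_not_P[OF c]
      by (rule sum.cong[OF refl], rule inner, simp)
  qed
  also have "\<dots> = of_nat (card {S. S\<subseteq>{1..k} \<and> card S = j \<and> oc k S = a})"
  proof -
    have "(\<Sum>S\<in>{S. S \<subseteq> {1..k} \<and> card S = j}. if oc k S = a then (1::'a) else 0)
       = (\<Sum>S\<in>{S\<in>{S. S \<subseteq> {1..k} \<and> card S = j}. oc k S = a}. 1)"
      by (rule sum.inter_filter[symmetric]) simp
    also have "{S\<in>{S. S \<subseteq> {1..k} \<and> card S = j}. oc k S = a} = {S. S\<subseteq>{1..k} \<and> card S = j \<and> oc k S = a}"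
      by auto
    finally show ?thesis by simp
  qed
  finally show ?thesis .
qed

definition Mc :: "complex \<Rightarrow> nat \<Rightarrow> nat \<Rightarrow> complex" where
  "Mc b a d = (if d \<le> a \<and> even (a + d) then of_nat (a choose ((a+d) div 2)) * b^((a-d) div 2) else 0)"

lemma Mc_rec0: "Mc b (Suc a) 0 = 2 * b * Mc b a 1"
proof (cases "even a")
  case True then show ?thesis by (simp add: Mc_def)
next
  case False
  then obtain m where a: "a = Suc (2*m)" by (metis oddE Suc_eq_plus1 add.commute)
  have e1: "(Suc (Suc (2*m)) + 0) div 2 = Suc m" by simp
  have e2: "(Suc (Suc (2*m)) - 0) div 2 = Suc m" by simp
  have e3: "(Suc (2*m) + 1) div 2 = Suc m" by simp
  have e4: "(Suc (2*m) - 1) div 2 = m" by simp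
  have sym: "Suc (2*m) choose m = Suc (2*m) choose Suc m"
    using binomial_symmetric[of m "Suc (2*m)"] by simp
  have "Suc (Suc (2*m)) choose Suc m = 2 * (Suc (2*m) choose Suc m)"
    using sym by simp
  then show ?thesis unfolding a Mc_def e1 e2 e3 e4 by simp
qed

lemma Mc_recS: "Mc b (Suc a) (Suc d) = Mc b a d + b * Mc b a (Suc (Suc d))"
proof (cases "d \<le> a \<and> even (a + d)")
  case False
  then show ?thesis by (auto simp: Mc_def)
next
  case True
  then obtain t where a: "a = d + 2*t"
    by (metis add_diff_inverse_nat dvd_def even_add le_add_diff_inverse not_le mult_2 even_diff_nat)
  show ?thesis
  proof (cases t)
    case 0
    then show ?thesis unfolding a Mc_def by simp
  next
    case (Suc t')
    have e1: "(Suc (d + 2*t) + Suc d) div 2 = Suc (d + t)" by simp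
    have e2: "(Suc (d + 2*t) - Suc d) div 2 = t" by simp
    have e3: "(d + 2*t + d) div 2 = d + t" by simp
    have e4: "(d + 2*t - d) div 2 = t" by simp
    have e5: "(d + 2*t + Suc (Suc d)) div 2 = Suc (d + t)" by simp
    have e6: "(d + 2*t - Suc (Suc d)) div 2 = t'" using Suc by simp
    have "Suc (d + 2*t) choose Suc (d + t) = (d + 2*t choose (d+t)) + (d + 2*t choose Suc (d+t))"
      by simp
    then show ?thesis unfolding a Mc_def e1 e2 e3 e4 e5 e6 using Suc
      by (simp add: algebra_simps)
  qed
qed

definition L :: "complex \<Rightarrow> nat \<Rightarrow> complex poly \<Rightarrow> nat \<Rightarrow> complex" where
  "L b n p d = (\<Sum>a\<le>n. coeff p a * Mc b a d)"

lemma L_shift: "L b (Suc n) (pCons 0 p) d =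
   (if d = 0 then 2 * b * L b n p 1 else L b n p (d-1) + b * L b n p (Suc d))"
proof -
  have "L b (Suc n) (pCons 0 p) d = (\<Sum>a\<le>n. coeff p a * Mc b (Suc a) d)"
    unfolding L_def sum.atMost_Suc_shift by simp
  also have "\<dots> = (if d = 0 then 2 * b * L b n p 1 else L b n p (d-1) + b * L b n p (Suc d))"
  proof (cases d)
    case 0 then show ?thesis by (simp add: Mc_rec0 L_def sum_distrib_left algebra_simps)
  next
    case (Suc d')
    then show ?thesis by (simp add: Mc_recS L_def sum_distrib_left sum.distrib algebra_simps)
  qed
  finally show ?thesis .
qed

lemma L_diff: "L b n (p - [:c:] * q) d = L b n p d - c * L b n q d"
  by (simp add: L_def algebra_simps sum_subtractf sum_distrib_left)

lemma L_ext: "(\<And>a. a > m \<Longrightarrow> coeff p a = 0) \<Longrightarrow> n \<ge> m \<Longrightarrow> L b n p d = L b m p d"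
proof (induction n)
  case 0 then show ?case by simp
next
  case (Suc n)
  show ?case
  proof (cases "Suc n = m")
    case True then show ?thesis by simp
  next
    case False
    then have "n \<ge> m" using Suc.prems by simp
    then show ?thesis using Suc by (simp add: L_def)
  qed
qed

lemma Pp_coeff: "a > k \<Longrightarrow> coeff (Pp c k) a = 0"
proof (induction c k arbitrary: a rule: Pp.induct)
  case (1 c) then show ?case by (simp add: coeff_const)
next
  case (2 c) then show ?case by (cases a) (auto simp: coeff_const)
next
  case (3 c n)
  then obtain a' where a: "a = Suc a'" by (cases a) auto
  show ?case using 3 a by (simp add: coeff_const)
qed

lemma Pp_lead: "k \<ge> 1 \<Longrightarrow> coeff (Pp c k) k = 1"
proof (induction c k rule: Pp.induct)
  case (1 c) then show ?case by simp
next
  case (2 c) then show ?case by simp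
next
  case (3 c n)
  show ?case
  proof (cases n)
    case 0 then show ?thesis by (simp add: coeff_const)
  next
    case (Suc n') then show ?thesis using 3 Pp_coeff[of n' "Suc (Suc n')" c] Pp_coeff[of "Suc n'" "Suc (Suc (Suc n'))" c]
      by (simp add: coeff_const)
  qed
qed

lemma L_one: "L b n [:x:] d = x * (if d = 0 then 1 else 0)"
  unfolding L_def by (subst sum.mono_neutral_right[of "{..n}" "{0}"]) (auto simp: coeff_const Mc_def)

lemma LPp: "n \<ge> k \<Longrightarrow> L (c*(1-c)) n (Pp c k) d = (if k = 0 then (if d = 0 then 2 else 0) else (if d = k then 1 else 0))"
proof (induction c k arbitrary: n d rule: Pp.induct)
  case (1 c) then show ?case by (simp add: L_one)
next
  case (2 c)
  then obtain n' where n: "n = Suc n'" by (cases n) auto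
  have "[:0,1:] = pCons 0 [:1::complex:]" by simp
  then show ?case unfolding n by (simp only: Pp.simps L_shift) (auto simp: L_one)
next
  case (3 c k)
  then obtain n' where n: "n = Suc n'" by (cases n) auto
  have n': "n' \<ge> Suc k" using 3 n by simp
  have X: "[:0,1:] * Pp c (Suc k) = pCons 0 (Pp c (Suc k))" by simp
  have A: "L (c*(1-c)) n (Pp c k) d = (if k = 0 then (if d = 0 then 2 else 0) else (if d = k then 1 else 0))"
    using "3.IH"(2) "3.prems" by simp
  have B: "\<And>d. L (c*(1-c)) n' (Pp c (Suc k)) d = (if d = Suc k then 1 else 0)"
    using "3.IH"(1)[OF n'] by simp
  show ?case unfolding Pp.simps X L_diff A unfolding n L_shift B
    by (cases "k = 0") auto
qed

lemma Mc_zero: "d > a \<Longrightarrow> Mc b a d = 0" by (simp add: Mc_def)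

lemma Mc_00: "Mc b 0 d = (if d = 0 then 1 else 0)" by (simp add: Mc_def)

lemma key_sum:
  assumes k: "k \<ge> 1"
  shows "(\<Sum>a\<le>k. (coeff (Pp c k) a - (if a = 0 \<and> even k then 2*c^k else 0)) * (\<Sum>d\<le>a. Mc (c*(1-c)) a d * x d))
     = x k - (if even k then 2*c^k * x 0 else 0)"
proof -
  let ?b = "c*(1-c)"
  let ?c' = "\<lambda>a. coeff (Pp c k) a - (if a = 0 \<and> even k then 2*c^k else 0)"
  have inner: "\<And>a. a \<le> k \<Longrightarrow> (\<Sum>d\<le>a. Mc ?b a d * x d) = (\<Sum>d\<le>k. Mc ?b a d * x d)"
    by (rule sum.mono_neutral_left) (auto simp: Mc_zero)
  have "(\<Sum>a\<le>k. ?c' a * (\<Sum>d\<le>a. Mc ?b a d * x d)) = (\<Sum>a\<le>k. ?c' a * (\<Sum>d\<le>k. Mc ?b a d * x d))"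
    by (rule sum.cong) (auto simp: inner)
  also have "\<dots> = (\<Sum>d\<le>k. (\<Sum>a\<le>k. ?c' a * Mc ?b a d) * x d)"
    by (simp add: sum_distrib_left sum_distrib_right mult.assoc) (rule sum.swap)
  also have "\<dots> = (\<Sum>d\<le>k. ((if d = k then 1 else 0) - (if even k then 2*c^k else 0) * (if d = 0 then 1 else 0)) * x d)"
  proof (rule sum.cong[OF refl])
    fix d assume "d \<in> {..k}"
    have "(\<Sum>a\<le>k. ?c' a * Mc ?b a d) = L ?b k (Pp c k) d - (\<Sum>a\<le>k. (if a = 0 \<and> even k then 2*c^k else 0) * Mc ?b a d)"
      unfolding L_def by (simp add: left_diff_distrib sum_subtractf)
    also have "(\<Sum>a\<le>k. (if a = 0 \<and> even k then 2*c^k else 0) * Mc ?b a d) = (if even k then 2*c^k else 0) * (if d = 0 then 1 else 0)"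
      by (subst sum.mono_neutral_right[of "{..k}" "{0}"]) (auto simp: Mc_00)
    also have "L ?b k (Pp c k) d = (if d = k then 1 else 0)" using LPp[of k k c d] k by simp
    finally show "(\<Sum>a\<le>k. ?c' a * Mc ?b a d) * x d = ((if d = k then 1 else 0) - (if even k then 2*c^k else 0) * (if d = 0 then 1 else 0)) * x d"
      by simp
  qed
  also have "\<dots> = (\<Sum>d\<le>k. (if d = k then 1 else 0) * x d) - (\<Sum>d\<le>k. (if even k then 2*c^k else 0) * (if d = 0 then 1 else 0) * x d)"
    by (simp only: left_diff_distrib sum_subtractf)
  also have "(\<Sum>d\<le>k. (if d = k then 1 else 0) * x d) = x k"
    by (subst sum.mono_neutral_right[of "{..k}" "{k}"]) auto
  also have "(\<Sum>d\<le>k. (if even k then 2*c^k else 0) * (if d = 0 then 1 else 0) * x d) = (if even k then 2*c^k else 0) * x 0"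
    by (subst sum.mono_neutral_right[of "{..k}" "{0}"]) auto
  finally show ?thesis by simp
qed

theorem lemma5p3:
  fixes \<alpha> :: real and N :: nat and A B :: "complex mat"
    and \<Delta> \<delta> :: "nat \<Rightarrow> complex"
  assumes "0 < \<alpha>" and "\<alpha> < 1"
    and "orth_proj N A" and "orth_proj N B"
  assumes \<Delta>0: "\<Delta> 0 = tr A - of_real \<alpha> * of_nat N"
    and \<Delta>k: "\<And>k. k \<ge> 1 \<Longrightarrow> \<Delta> k =
        - (\<Sum>a=0..k-1. \<Delta> a * (\<Sum>j=1..k-1. of_real ((-\<alpha>) ^ (k - j)) * qpoly k j a 1))
        + (if odd k then 2 * of_real (\<alpha> ^ k) * (tr B - of_nat N / 2) else 0)
        + tr (((A - of_real \<alpha> \<cdot>\<^sub>m 1\<^sub>m N) * (2 \<cdot>\<^sub>m B - 1\<^sub>m N)) ^\<^sub>m k)"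
  assumes \<delta>0: "\<delta> 0 = tr A - of_real \<alpha> * of_nat N"
    and \<delta>k: "\<And>k. k \<ge> 1 \<Longrightarrow> \<delta> k =
        tr (((A - of_real \<alpha> \<cdot>\<^sub>m 1\<^sub>m N) * (2 \<cdot>\<^sub>m B - 1\<^sub>m N)) ^\<^sub>m k)
        + (if even k then 2 * of_real (\<alpha> ^ k) * (tr A - of_real \<alpha> * of_nat N) else 0)
        + (if odd k then 2 * of_real (\<alpha> ^ k) * (tr B - of_nat N / 2) else 0)"
  shows "\<forall>k\<ge>1. \<Delta> k = (\<Sum>a\<in>{a. a \<le> k \<and> a mod 2 = k mod 2}.
            of_nat (k choose ((k + a) div 2)) * of_real ((\<alpha> * (1 - \<alpha>)) ^ ((k - a) div 2)) * \<delta> a)"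
proof -
  define c where "c = complex_of_real \<alpha>"
  define b where "b = c * (1 - c)"
  define c' where "c' = (\<lambda>k a. coeff (Pp c k) a - (if a = 0 \<and> even k then 2*c^k else 0))"
  define R where "R = (\<lambda>k. \<Sum>d\<le>k. Mc b k d * \<delta> d)"
  have Rst: "(\<Sum>a\<in>{a. a \<le> k \<and> a mod 2 = k mod 2}.
            of_nat (k choose ((k + a) div 2)) * of_real ((\<alpha> * (1 - \<alpha>)) ^ ((k - a) div 2)) * \<delta> a) = R k" for k
  proof -
    have E: "{a. a \<le> k \<and> a mod 2 = k mod 2} = {a\<in>{..k}. even (k + a)}" by auto presburger+
    have "(\<Sum>a\<in>{a. a \<le> k \<and> a mod 2 = k mod 2}.
            of_nat (k choose ((k + a) div 2)) * of_real ((\<alpha> * (1 - \<alpha>)) ^ ((k - a) div 2)) * \<delta> a)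
        = (\<Sum>a\<in>{a\<in>{..k}. even (k + a)}.
            of_nat (k choose ((k + a) div 2)) * of_real ((\<alpha> * (1 - \<alpha>)) ^ ((k - a) div 2)) * \<delta> a)"
      unfolding E ..
    also have "\<dots> = (\<Sum>a\<le>k. if even (k + a) then of_nat (k choose ((k + a) div 2)) * of_real ((\<alpha> * (1 - \<alpha>)) ^ ((k - a) div 2)) * \<delta> a else 0)"
      by (rule sum.inter_filter) simp
    also have "\<dots> = R k" unfolding R_def
      by (rule sum.cong) (auto simp: Mc_def b_def c_def)
    finally show ?thesis .
  qed
  have cc: "\<And>k a. k \<ge> 1 \<Longrightarrow> a < k \<Longrightarrow>
      (\<Sum>j=1..k-1. of_real ((-\<alpha>) ^ (k - j)) * qpoly k j a (1::complex)) = c' k a"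
  proof -
    fix k a :: nat assume k: "k \<ge> 1" and a: "a < k"
    have "(\<Sum>j=1..k-1. of_real ((-\<alpha>) ^ (k - j)) * qpoly k j a (1::complex))
        = (\<Sum>j=1..k-1. (-c)^(k-j) * of_nat (card {S. S\<subseteq>{1..k} \<and> card S = j \<and> oc k S = a}))"
      by (rule sum.cong) (auto simp: qpoly_1 c_def)
    also have "\<dots> = c' k a" unfolding c'_def by (rule coeff_count[OF k a])
    finally show "(\<Sum>j=1..k-1. of_real ((-\<alpha>) ^ (k - j)) * qpoly k j a (1::complex)) = c' k a" .
  qed
  have main: "\<Delta> k = R k" for k
  proof (induction k rule: less_induct)
    case (less k)
    show ?case
    proof (cases "k = 0")
      case True
      then show ?thesis using \<Delta>0 \<delta>0 by (simp add: R_def Mc_00)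
    next
      case False
      then have k: "k \<ge> 1" by simp
      have e: "(if odd k then 2 * of_real (\<alpha> ^ k) * (tr B - of_nat N / 2) else 0)
        + tr (((A - of_real \<alpha> \<cdot>\<^sub>m 1\<^sub>m N) * (2 \<cdot>\<^sub>m B - 1\<^sub>m N)) ^\<^sub>m k)
        = \<delta> k - (if even k then 2*c^k * \<delta> 0 else 0)"
        using \<delta>k[OF k] \<delta>0 by (simp add: c_def)
      have s1: "(\<Sum>a=0..k-1. \<Delta> a * (\<Sum>j=1..k-1. of_real ((-\<alpha>) ^ (k - j)) * qpoly k j a 1))
          = (\<Sum>a=0..k-1. c' k a * R a)"
      proof (rule sum.cong[OF refl])
        fix a assume "a \<in> {0..k-1}"
        then have a: "a < k" using k by auto
        show "\<Delta> a * (\<Sum>j=1..k-1. of_real ((-\<alpha>) ^ (k - j)) * qpoly k j a 1) = c' k a * R a"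
          using cc[OF k a] less.IH[OF a] by (simp add: mult.commute)
      qed
      have ks: "{..k} = insert k {0..k-1}" using k by auto
      have lead: "c' k k = 1" using Pp_lead[OF k] k unfolding c'_def by simp
      have KS: "(\<Sum>a\<le>k. c' k a * R a) = \<delta> k - (if even k then 2*c^k * \<delta> 0 else 0)"
        unfolding R_def c'_def b_def by (rule key_sum[OF k])
      have "(\<Sum>a\<le>k. c' k a * R a) = R k + (\<Sum>a=0..k-1. c' k a * R a)"
        unfolding ks using k by (subst sum.insert) (auto simp: lead)
      then have F: "\<delta> k - (if even k then 2*c^k * \<delta> 0 else 0) = R k + (\<Sum>a=0..k-1. c' k a * R a)"
        using KS by simp
      have D: "\<Delta> k = ((if odd k then 2 * of_real (\<alpha> ^ k) * (tr B - of_nat N / 2) else 0)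
        + tr (((A - of_real \<alpha> \<cdot>\<^sub>m 1\<^sub>m N) * (2 \<cdot>\<^sub>m B - 1\<^sub>m N)) ^\<^sub>m k)) - (\<Sum>a=0..k-1. c' k a * R a)"
        unfolding \<Delta>k[OF k] s1 by simp
      show ?thesis unfolding D e F by simp
    qed
  qed
  show ?thesis using main Rst by simp
qed

end
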